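(* Let $\mathcal{T}$ be a trifocal Grassmann tensor of dimension $n_1\times n_2\times n_3$ satisfying the Genericity Assumption, with canonical form $\mathcal{T}^c$ and multilinear rank $(r_1,r_2,r_3)$. Let $V_j\in GL(n_j)$ ($j=1,2,3$) be invertible matrices with $\mathcal{T}^c=(V_1,V_2,V_3)\cdot\mathcal{T}$. For each $j$ let $k_1<\dots<k_{r_j}$ be the indices of the nonzero rows of the flattening $\mathcal{T}^c_j$, and let $U_j$ be the $n_j\times r_j$ matrix with columns $\mathbf{e}_{k_1},\dots,\mathbf{e}_{k_{r_j}}$ (standard basis vectors of $\mathbb{C}^{n_j}$). Put $\mathcal{C}^c=(U_1^*,U_2^*,U_3^* )\cdot\mathcal{T}^c$ (the tensor obtained from $\mathcal{T}^c$ by deleting all zero slices). Let $M_j=V_j^{-1}U_j$, let $E_j$ be an $r_j\times r_j$ unitary matrix whose columns are orthonormal eigenvectors of $M_j^*M_j$, and let $D_j$ be the diagonal matrix of the corresponding singular values of $M_j$ (square roots of the eigenvalues, in the same order). Set $B_j=E_jD_j^{-1}$, $S_j=M_jB_j$ and $\mathcal{C}=(B_1^{-1},B_2^{-1},B_3^{-1})\cdot\mathcal{C}^c$. Then each $S_j$ is semi-orthogonal ($S_j^*S_j=I_{r_j}$), $\mathcal{T}=(S_1,S_2,S_3)\cdot\mathcal{C}$ and $\mathcal{C}=(S_1^*,S_2^*,S_3^* )\cdot\mathcal{T}$; that is, $\mathcal{C}$ is a core of $\mathcal{T}$.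
   Context: Work over $\mathbb{C}$; $A^*$ is the conjugate transpose. Multilinear multiplication: for matrices $A_r$ of size $m_r\times n_r$ and a tensor $\mathcal{T}=[T_{i,j,k}]$ of dimension $n_1\times n_2\times n_3$, $(A_1,A_2,A_3)\cdot\mathcal{T}$ is the $m_1\times m_2\times m_3$ tensor with entries $\sum_{i',j',k'}(A_1)_{i,i'}(A_2)_{j,j'}(A_3)_{k,k'}T_{i',j',k'}$. Flattenings: $\mathcal{T}_1$ is the $n_1\times(n_2n_3)$ matrix whose row $i$ contains the entries $T_{i,j,k}$; $\mathcal{T}_2,\mathcal{T}_3$ analogously; the multilinear rank is $(\mathrm{rk}\,\mathcal{T}_1,\mathrm{rk}\,\mathcal{T}_2,\mathrm{rk}\,\mathcal{T}_3)$. A core of $\mathcal{T}$ with multilinear rank $(r_1,r_2,r_3)$ is a tensor $\mathcal{C}$ of dimension $r_1\times r_2\times r_3$ for which there exist $n_j\times r_j$ matrices $S_j$ with $S_j^*S_j=I_{r_j}$, $(S_1^*,S_2^*,S_3^* )\cdot\mathcal{T}=\mathcal{C}$ and $(S_1,S_2,S_3)\cdot\mathcal{C}=\mathcal{T}$. Trifocal Grassmann tensor: let $P_j$ ($j=1,2,3$) be maximal-rank $(h_j+1)\times(k+1)$ matrices, $h_j\ge2$, with profile $(\alpha_1,\alpha_2,\alpha_3)$ ($1\le\alpha_j\le h_j$, $\sum\alpha_j=k+1$), $s_j=h_j-\alpha_j$. Entries $\mathcal{T}_{I,J,K}$ (multi-indices $I,J,K$ of sizes $s_j+1$, lexicographically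 ordered) are the determinants of the square submatrices of $[P_1^T|P_2^T|P_3^T]$ formed by the columns of block 1 not in $I$, block 2 not in $J$, block 3 not in $K$. Genericity Assumption: with $L_j$ the column space of $P_j^T$, $L_t+(L_r\cap L_s)=\mathbb{C}^{k+1}$ for all $\{r,s,t\}=\{1,2,3\}$. With $i=h_1+h_2+h_3+1-2k$, $j_{r,s}=k-h_t$, there are $H_j\in GL(h_j+1)$, $K\in GL(k+1)$ with $[(H_1P_1K)^T|(H_2P_2K)^T|(H_3P_3K)^T]=\Phi$, where (row blocks of sizes $i,j_{1,2},j_{1,3},j_{2,3}$) $$\Phi=\left[\begin{array}{ccc|ccc|ccc} I_i&0&0&I_i&0&0&I_i&0&0\\ 0&I_{j_{1,2}}&0&0&I_{j_{1,2}}&0&0&0&0\\ 0&0&I_{j_{1,3}}&0&0&0&0&I_{j_{1,3}}&0\\ 0&0&0&0&0&I_{j_{2,3}}&0&0&I_{j_{2,3}}\end{array}\right],$$ and the canonical form $\mathcal{T}^c$ is the Grassmann tensor of the same profile computed from $\Phi$. In the canonical form, every column of each flattening $\mathcal{T}^c_j$ is either zero or a standard basis vector up to sign (at most one nonzero entry per column, equal to $\pm1$), and the multilinear ranks of $\mathcal{T}$ and $\mathcal{T}^c$ agree. *)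

theory Defs
  imports Complex_Main
    "Jordan_Normal_Form.Schur_Decomposition"
    "Jordan_Normal_Form.DL_Rank"
    "Jordan_Normal_Form.Determinant"
begin

text \<open>A tensor of dimension n1 x n2 x n3 is a function on index triples; only
  indices i < n1, j < n2, l < n3 are meaningful (0-based indexing).\<close>
type_synonym tensor3 = "nat \<Rightarrow> nat \<Rightarrow> nat \<Rightarrow> complex"

definition teq :: "nat \<Rightarrow> nat \<Rightarrow> nat \<Rightarrow> tensor3 \<Rightarrow> tensor3 \<Rightarrow> bool" where
  "teq n1 n2 n3 T T' \<longleftrightarrow> (\<forall>i<n1. \<forall>j<n2. \<forall>l<n3. T i j l = T' i j l)"

definition mlmul :: "complex mat \<Rightarrow> complex mat \<Rightarrow> complex mat \<Rightarrow> tensor3 \<Rightarrow> tensor3" where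
  "mlmul A1 A2 A3 T = (\<lambda>i j l.
     \<Sum>i'<dim_col A1. \<Sum>j'<dim_col A2. \<Sum>l'<dim_col A3.
       A1 $$ (i,i') * A2 $$ (j,j') * A3 $$ (l,l') * T i' j' l')"

text \<open>Flattenings (the order of the columns is immaterial for everything below).\<close>
definition flat1 :: "nat \<Rightarrow> nat \<Rightarrow> nat \<Rightarrow> tensor3 \<Rightarrow> complex mat" where
  "flat1 n1 n2 n3 T = mat n1 (n2 * n3) (\<lambda>(i,c). T i (c div n3) (c mod n3))"
definition flat2 :: "nat \<Rightarrow> nat \<Rightarrow> nat \<Rightarrow> tensor3 \<Rightarrow> complex mat" where
  "flat2 n1 n2 n3 T = mat n2 (n1 * n3) (\<lambda>(j,c). T (c div n3) j (c mod n3))"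
definition flat3 :: "nat \<Rightarrow> nat \<Rightarrow> nat \<Rightarrow> tensor3 \<Rightarrow> complex mat" where
  "flat3 n1 n2 n3 T = mat n3 (n1 * n2) (\<lambda>(l,c). T (c div n2) (c mod n2) l)"

definition mrank :: "complex mat \<Rightarrow> nat" where
  "mrank A = vec_space.rank (dim_row A) A"

definition minv :: "complex mat \<Rightarrow> complex mat" where
  "minv A = (SOME B. inverts_mat A B \<and> inverts_mat B A)"

text \<open>All increasing lists of length m drawn from xs, in lexicographic order
  (for xs strictly increasing).\<close>
fun combs :: "nat list \<Rightarrow> nat \<Rightarrow> nat list list" where
  "combs xs 0 = [[]]"
| "combs [] (Suc m) = []"
| "combs (x # xs) (Suc m) = map ((#) x) (combs xs m) @ combs xs (Suc m)"

text \<open>For P of size (h+1) x (k+1) and profile entry alpha, the multi-indices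
  have size s+1 = h+1-alpha and range over subsets of the rows of P
  (= columns of P^T), lexicographically ordered.\<close>
definition midxs :: "complex mat \<Rightarrow> nat \<Rightarrow> nat list list" where
  "midxs P a = combs [0..<dim_row P] (dim_row P - a)"

definition gdim :: "complex mat \<Rightarrow> nat \<Rightarrow> nat" where
  "gdim P a = length (midxs P a)"

definition cmpl_cols :: "complex mat \<Rightarrow> nat list \<Rightarrow> complex vec list" where
  "cmpl_cols P I = map (row P) (filter (\<lambda>r. r \<notin> set I) [0..<dim_row P])"

text \<open>Trifocal Grassmann tensor of profile (a1,a2,a3): entry (I,J,K) is the determinant
  of the square submatrix of [P1^T|P2^T|P3^T] formed by the columns of block 1 not in I,
  of block 2 not in J and of block 3 not in K.\<close>
definition grassmann :: "complex mat \<Rightarrow> complex mat \<Rightarrow> complex mat \<Rightarrow> nat \<Rightarrow> nat \<Rightarrow> nat \<Rightarrow> tensor3" where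
  "grassmann P1 P2 P3 a1 a2 a3 = (\<lambda>i j l.
     det (mat_of_cols (dim_col P1)
       (cmpl_cols P1 (midxs P1 a1 ! i) @ cmpl_cols P2 (midxs P2 a2 ! j) @ cmpl_cols P3 (midxs P3 a3 ! l))))"

definition colspaceT :: "complex mat \<Rightarrow> complex vec set" where
  "colspaceT P = {transpose_mat P *\<^sub>v x | x. x \<in> carrier_vec (dim_row P)}"

definition vsum :: "complex vec set \<Rightarrow> complex vec set \<Rightarrow> complex vec set" where
  "vsum A B = {u + v | u v. u \<in> A \<and> v \<in> B}"

definition genericity :: "nat \<Rightarrow> complex mat \<Rightarrow> complex mat \<Rightarrow> complex mat \<Rightarrow> bool" where
  "genericity k P1 P2 P3 \<longleftrightarrow>
     vsum (colspaceT P3) (colspaceT P1 \<inter> colspaceT P2) = carrier_vec (k+1) \<and>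
     vsum (colspaceT P2) (colspaceT P1 \<inter> colspaceT P3) = carrier_vec (k+1) \<and>
     vsum (colspaceT P1) (colspaceT P2 \<inter> colspaceT P3) = carrier_vec (k+1)"

text \<open>The matrix Phi of size (k+1) x ((h1+1)+(h2+1)+(h3+1)), with row blocks of sizes
  i, j12, j13, j23, where i = h1+h2+h3+1-2k and j_rs = k - h_t.  Each column of Phi is a
  standard basis vector; phi_row gives the row of its entry 1.
  Block 1 (column sub-blocks I_i, I_j12, I_j13): column c is e_c.
  Block 2 (column sub-blocks I_i, I_j12, I_j23): column c is e_c if c < i+j12,
     else e_(i+j12+j13+(c-i-j12)) = e_(c+j13).
  Block 3 (column sub-blocks I_i, I_j13, I_j23): column c is e_c if c < i,
     else e_(c+j12).\<close>
definition phi_row :: "nat \<Rightarrow> nat \<Rightarrow> nat \<Rightarrow> nat \<Rightarrow> nat \<Rightarrow> nat" where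
  "phi_row h1 h2 h3 k c =
    (let i = h1 + h2 + h3 + 1 - 2*k; j12 = k - h3; j13 = k - h2 in
     if c < h1 + 1 then c
     else if c < h1 + 1 + h2 + 1 then
       (let c' = c - (h1+1) in if c' < i + j12 then c' else c' + j13)
     else
       (let c' = c - (h1+1) - (h2+1) in if c' < i then c' else c' + j12))"

definition Phi :: "nat \<Rightarrow> nat \<Rightarrow> nat \<Rightarrow> nat \<Rightarrow> complex mat" where
  "Phi h1 h2 h3 k = mat (k+1) ((h1+1)+(h2+1)+(h3+1))
     (\<lambda>(a,c). if a = phi_row h1 h2 h3 k c then 1 else 0)"

definition canP1 :: "nat \<Rightarrow> nat \<Rightarrow> nat \<Rightarrow> nat \<Rightarrow> complex mat" where
  "canP1 h1 h2 h3 k = mat (h1+1) (k+1) (\<lambda>(c,a). Phi h1 h2 h3 k $$ (a, c))"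
definition canP2 :: "nat \<Rightarrow> nat \<Rightarrow> nat \<Rightarrow> nat \<Rightarrow> complex mat" where
  "canP2 h1 h2 h3 k = mat (h2+1) (k+1) (\<lambda>(c,a). Phi h1 h2 h3 k $$ (a, (h1+1) + c))"
definition canP3 :: "nat \<Rightarrow> nat \<Rightarrow> nat \<Rightarrow> nat \<Rightarrow> complex mat" where
  "canP3 h1 h2 h3 k = mat (h3+1) (k+1) (\<lambda>(c,a). Phi h1 h2 h3 k $$ (a, (h1+1) + (h2+1) + c))"

definition canonical_form :: "nat \<Rightarrow> nat \<Rightarrow> nat \<Rightarrow> nat \<Rightarrow> nat \<Rightarrow> nat \<Rightarrow> nat \<Rightarrow> tensor3" where
  "canonical_form h1 h2 h3 k a1 a2 a3 =
     grassmann (canP1 h1 h2 h3 k) (canP2 h1 h2 h3 k) (canP3 h1 h2 h3 k) a1 a2 a3"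

definition nz_rows :: "complex mat \<Rightarrow> nat list" where
  "nz_rows F = filter (\<lambda>i. row F i \<noteq> 0\<^sub>v (dim_col F)) [0..<dim_row F]"

definition sel_mat :: "complex mat \<Rightarrow> complex mat" where
  "sel_mat F = mat (dim_row F) (length (nz_rows F)) (\<lambda>(a,b). if a = nz_rows F ! b then 1 else 0)"

end

theory Submission imports Defs begin

lemma adj_dims[simp]: "dim_row (mat_adjoint A) = dim_col A" "dim_col (mat_adjoint A) = dim_row A"
  unfolding mat_adjoint_def by auto

lemma adj_index[simp]: "i < dim_col A \<Longrightarrow> j < dim_row A \<Longrightarrow> mat_adjoint A $$ (i,j) = cnj (A $$ (j,i))"
  unfolding mat_adjoint_def by (simp add: mat_of_rows_index)

lemma adj_carrier: "A \<in> carrier_mat n m \<Longrightarrow> mat_adjoint A \<in> carrier_mat m n"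
  by auto

lemma mult_entry:
  assumes "A \<in> carrier_mat p q" "B \<in> carrier_mat q s" "i < p" "k < s"
  shows "(A * B) $$ (i,k) = (\<Sum>a<q. A $$ (i,a) * B $$ (a,k))"
  using assms by (simp add: scalar_prod_def lessThan_atLeast0)

lemma adj_mult:
  fixes A B :: "complex mat"
  assumes "A \<in> carrier_mat n m" "B \<in> carrier_mat m p"
  shows "mat_adjoint (A * B) = mat_adjoint B * mat_adjoint A"
proof (rule eq_matI)
  fix i j assume ij: "i < dim_row (mat_adjoint B * mat_adjoint A)" "j < dim_col (mat_adjoint B * mat_adjoint A)"
  then have i: "i < p" and j: "j < n" using assms by auto
  have "mat_adjoint (A * B) $$ (i,j) = cnj ((A*B) $$ (j,i))" using i j assms by simp
  also have "\<dots> = (\<Sum>a<m. cnj (B $$ (a,i)) * cnj (A $$ (j,a)))"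
    using mult_entry[OF assms j i] by (simp add: mult.commute)
  also have "\<dots> = (mat_adjoint B * mat_adjoint A) $$ (i,j)"
    using mult_entry[OF adj_carrier[OF assms(2)] adj_carrier[OF assms(1)] i j] assms i j
    by (auto intro!: sum.cong)
  finally show "mat_adjoint (A * B) $$ (i,j) = (mat_adjoint B * mat_adjoint A) $$ (i,j)" .
qed (use assms in auto)

lemma adj_one: "mat_adjoint (1\<^sub>m n :: complex mat) = 1\<^sub>m n"
  by (rule eq_matI) auto

lemma minv_props:
  fixes A X :: "complex mat"
  assumes "A \<in> carrier_mat n n" "X \<in> carrier_mat n n" "A * X = 1\<^sub>m n"
  shows "minv A \<in> carrier_mat n n \<and> A * minv A = 1\<^sub>m n \<and> minv A * A = 1\<^sub>m n"
proof -
  have XA: "X * A = 1\<^sub>m n" using mat_mult_left_right_inverse assms by blast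
  have "inverts_mat A X \<and> inverts_mat X A" using assms XA unfolding inverts_mat_def by auto
  then have Y: "inverts_mat A (minv A) \<and> inverts_mat (minv A) A"
    unfolding minv_def by (rule someI)
  then have 1: "A * minv A = 1\<^sub>m n" and 2: "minv A * A = 1\<^sub>m (dim_row (minv A))"
    using assms unfolding inverts_mat_def by auto
  have "dim_col (minv A) = n" using arg_cong[OF 1, of dim_col] by simp
  moreover have "dim_row (minv A) = n" using arg_cong[OF 2, of dim_col] assms by simp
  ultimately show ?thesis using 1 2 by auto
qed

lemma minv_props':
  fixes A :: "complex mat"
  assumes "A \<in> carrier_mat n n" "invertible_mat A"
  shows "minv A \<in> carrier_mat n n \<and> A * minv A = 1\<^sub>m n \<and> minv A * A = 1\<^sub>m n"
proof -
  obtain X where X: "inverts_mat A X" "inverts_mat X A" using assms unfolding invertible_mat_def by auto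
  then have 1: "A * X = 1\<^sub>m n" using assms unfolding inverts_mat_def by auto
  have "dim_col X = n" using arg_cong[OF 1, of dim_col] by simp
  moreover have "dim_row X = n" using X(2) assms unfolding inverts_mat_def
    by (metis carrier_matD(2) index_mult_mat(3) index_one_mat(3))
  ultimately show ?thesis using minv_props[OF assms(1) _ 1] by auto
qed

lemma swap13:
  "(\<Sum>c\<in>C. \<Sum>x\<in>X. \<Sum>y\<in>Y. \<Sum>z\<in>Z. G c x y z) = (\<Sum>x\<in>X. \<Sum>y\<in>Y. \<Sum>z\<in>Z. \<Sum>c\<in>C. (G c x y z :: complex))"
proof -
  have "(\<Sum>c\<in>C. \<Sum>x\<in>X. \<Sum>y\<in>Y. \<Sum>z\<in>Z. G c x y z) = (\<Sum>x\<in>X. \<Sum>c\<in>C. \<Sum>y\<in>Y. \<Sum>z\<in>Z. G c x y z)"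
    by (rule sum.swap)
  also have "\<dots> = (\<Sum>x\<in>X. \<Sum>y\<in>Y. \<Sum>c\<in>C. \<Sum>z\<in>Z. G c x y z)"
    by (rule sum.cong[OF refl], rule sum.swap)
  also have "\<dots> = (\<Sum>x\<in>X. \<Sum>y\<in>Y. \<Sum>z\<in>Z. \<Sum>c\<in>C. G c x y z)"
    by (intro sum.cong refl) (rule sum.swap)
  finally show ?thesis .
qed

lemma swap33:
  "(\<Sum>a\<in>A. \<Sum>b\<in>B. \<Sum>c\<in>C. \<Sum>x\<in>X. \<Sum>y\<in>Y. \<Sum>z\<in>Z. F a b c x y z)
   = (\<Sum>x\<in>X. \<Sum>y\<in>Y. \<Sum>z\<in>Z. \<Sum>a\<in>A. \<Sum>b\<in>B. \<Sum>c\<in>C. (F a b c x y z :: complex))"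
proof -
  have "(\<Sum>a\<in>A. \<Sum>b\<in>B. \<Sum>c\<in>C. \<Sum>x\<in>X. \<Sum>y\<in>Y. \<Sum>z\<in>Z. F a b c x y z)
      = (\<Sum>a\<in>A. \<Sum>b\<in>B. \<Sum>x\<in>X. \<Sum>y\<in>Y. \<Sum>z\<in>Z. \<Sum>c\<in>C. F a b c x y z)"
    by (intro sum.cong refl) (rule swap13)
  also have "\<dots> = (\<Sum>a\<in>A. \<Sum>x\<in>X. \<Sum>y\<in>Y. \<Sum>z\<in>Z. \<Sum>b\<in>B. \<Sum>c\<in>C. F a b c x y z)"
    by (intro sum.cong refl) (rule swap13)
  also have "\<dots> = (\<Sum>x\<in>X. \<Sum>y\<in>Y. \<Sum>z\<in>Z. \<Sum>a\<in>A. \<Sum>b\<in>B. \<Sum>c\<in>C. F a b c x y z)"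
    by (rule swap13)
  finally show ?thesis .
qed

lemma pull1: "x * ((\<Sum>b\<in>B. g b) * R) = (\<Sum>b\<in>B. x * (g b * (R::complex)))"
  by (simp add: sum_distrib_left sum_distrib_right mult.assoc)

lemma prod3: "(\<Sum>a\<in>A. f a) * (\<Sum>b\<in>B. g b) * (\<Sum>c\<in>C. h c) * t
   = (\<Sum>a\<in>A. \<Sum>b\<in>B. \<Sum>c\<in>C. f a * g b * h c * (t::complex))"
proof -
  have "(\<Sum>a\<in>A. f a) * (\<Sum>b\<in>B. g b) * (\<Sum>c\<in>C. h c) * t
     = (\<Sum>a\<in>A. f a) * ((\<Sum>b\<in>B. g b) * ((\<Sum>c\<in>C. h c) * t))" by (simp add: mult.assoc)
  also have "\<dots> = (\<Sum>a\<in>A. f a * ((\<Sum>b\<in>B. g b) * ((\<Sum>c\<in>C. h c) * t)))"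
    by (rule sum_distrib_right)
  also have "\<dots> = (\<Sum>a\<in>A. \<Sum>b\<in>B. f a * (g b * ((\<Sum>c\<in>C. h c) * t)))"
    by (intro sum.cong refl) (rule pull1)
  also have "\<dots> = (\<Sum>a\<in>A. \<Sum>b\<in>B. \<Sum>c\<in>C. (f a * g b) * (h c * t))"
    by (intro sum.cong refl) (simp add: sum_distrib_left sum_distrib_right mult.assoc)
  finally show ?thesis by (simp add: mult.assoc)
qed

lemma delta1: "i < (n::nat) \<Longrightarrow> (\<Sum>a<n. (if i = a then 1 else 0) * (f a::complex)) = f i"
proof -
  assume i: "i < n"
  have "(\<Sum>a<n. (if i = a then 1 else 0) * f a) = (\<Sum>a<n. if a = i then f a else 0)"
    by (intro sum.cong) auto
  also have "\<dots> = (if i \<in> {..<n} then f i else 0)" by (rule sum.delta) simp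
  finally show ?thesis using i by simp
qed

lemma mlmul_comp:
  assumes A: "A1 \<in> carrier_mat p1 q1" "A2 \<in> carrier_mat p2 q2" "A3 \<in> carrier_mat p3 q3"
    and B: "B1 \<in> carrier_mat q1 s1" "B2 \<in> carrier_mat q2 s2" "B3 \<in> carrier_mat q3 s3"
  shows "teq p1 p2 p3 (mlmul A1 A2 A3 (mlmul B1 B2 B3 T)) (mlmul (A1*B1) (A2*B2) (A3*B3) T)"
  unfolding teq_def
proof (intro allI impI)
  fix i j l assume ijl: "i < p1" "j < p2" "l < p3"
  have "mlmul A1 A2 A3 (mlmul B1 B2 B3 T) i j l =
    (\<Sum>a<q1. \<Sum>b<q2. \<Sum>c<q3. \<Sum>x<s1. \<Sum>y<s2. \<Sum>z<s3.
       A1 $$ (i,a) * A2 $$ (j,b) * A3 $$ (l,c) * (B1 $$ (a,x) * B2 $$ (b,y) * B3 $$ (c,z) * T x y z))"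
    using A B unfolding mlmul_def by (simp add: sum_distrib_left)
  also have "\<dots> = (\<Sum>x<s1. \<Sum>y<s2. \<Sum>z<s3. \<Sum>a<q1. \<Sum>b<q2. \<Sum>c<q3.
       A1 $$ (i,a) * A2 $$ (j,b) * A3 $$ (l,c) * (B1 $$ (a,x) * B2 $$ (b,y) * B3 $$ (c,z) * T x y z))"
    by (rule swap33)
  also have "\<dots> = (\<Sum>x<s1. \<Sum>y<s2. \<Sum>z<s3. (\<Sum>a<q1. A1 $$ (i,a) * B1 $$ (a,x)) *
      (\<Sum>b<q2. A2 $$ (j,b) * B2 $$ (b,y)) * (\<Sum>c<q3. A3 $$ (l,c) * B3 $$ (c,z)) * T x y z)"
    unfolding prod3 by (intro sum.cong refl) (simp add: mult_ac)
  also have "\<dots> = mlmul (A1*B1) (A2*B2) (A3*B3) T i j l"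
  proof -
    have d: "dim_col (A1*B1) = s1" "dim_col (A2*B2) = s2" "dim_col (A3*B3) = s3" using B by auto
    show ?thesis unfolding mlmul_def d
      by (intro sum.cong refl) (use A B ijl in \<open>simp add: mult_entry del: index_mult_mat\<close>)
  qed
  finally show "mlmul A1 A2 A3 (mlmul B1 B2 B3 T) i j l = mlmul (A1*B1) (A2*B2) (A3*B3) T i j l" .
qed

lemma mlmul_cong:
  assumes "teq (dim_col A1) (dim_col A2) (dim_col A3) X Y"
  shows "mlmul A1 A2 A3 X = mlmul A1 A2 A3 Y"
  using assms unfolding teq_def mlmul_def by (intro ext sum.cong refl) auto

lemma mlmul_one: "teq n1 n2 n3 (mlmul (1\<^sub>m n1) (1\<^sub>m n2) (1\<^sub>m n3) X) X"
  unfolding teq_def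
proof (intro allI impI)
  fix i j l assume ijl: "i < n1" "j < n2" "l < n3"
  have "mlmul (1\<^sub>m n1) (1\<^sub>m n2) (1\<^sub>m n3) X i j l =
    (\<Sum>a<n1. if i = a then (\<Sum>b<n2. if j = b then (\<Sum>c<n3. if l = c then X a b c else 0) else 0) else 0)"
    unfolding mlmul_def using ijl by (intro sum.cong refl) (auto simp: sum_distrib_left[symmetric] mult.assoc delta1)
  also have "\<dots> = X i j l" using ijl by simp
  finally show "mlmul (1\<^sub>m n1) (1\<^sub>m n2) (1\<^sub>m n3) X i j l = X i j l" .
qed

lemma teq_trans: "teq n1 n2 n3 X Y \<Longrightarrow> teq n1 n2 n3 Y Z \<Longrightarrow> teq n1 n2 n3 X Z"
  and teq_sym: "teq n1 n2 n3 X Y \<Longrightarrow> teq n1 n2 n3 Y X"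
  unfolding teq_def by auto

lemma diag_mult_entry:
  fixes D A :: "complex mat"
  assumes "D \<in> carrier_mat r r" "diagonal_mat D" "A \<in> carrier_mat r p" "i < r" "j < p"
  shows "(D * A) $$ (i,j) = D $$ (i,i) * A $$ (i,j)"
proof -
  have "(D * A) $$ (i,j) = (\<Sum>k<r. D $$ (i,k) * A $$ (k,j))" by (rule mult_entry[OF assms(1,3-5)])
  also have "\<dots> = (\<Sum>k<r. if k = i then D $$ (i,k) * A $$ (k,j) else 0)"
    using assms(1,2,4) unfolding diagonal_mat_def by (intro sum.cong refl) auto
  also have "\<dots> = (if i \<in> {..<r} then D $$ (i,i) * A $$ (i,j) else 0)" by (rule sum.delta) simp
  finally show ?thesis using assms by simp
qed

lemma mult_diag_entry:
  fixes D A :: "complex mat"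
  assumes "D \<in> carrier_mat r r" "diagonal_mat D" "A \<in> carrier_mat p r" "i < p" "j < r"
  shows "(A * D) $$ (i,j) = A $$ (i,j) * D $$ (j,j)"
proof -
  have "(A * D) $$ (i,j) = (\<Sum>k<r. A $$ (i,k) * D $$ (k,j))" by (rule mult_entry[OF assms(3,1,4,5)])
  also have "\<dots> = (\<Sum>k<r. if k = j then A $$ (i,k) * D $$ (k,j) else 0)"
    using assms(1,2,5) unfolding diagonal_mat_def by (intro sum.cong refl) auto
  also have "\<dots> = (if j \<in> {..<r} then A $$ (i,j) * D $$ (j,j) else 0)" by (rule sum.delta) simp
  finally show ?thesis using assms by simp
qed

lemma adj_inner:
  fixes M :: "complex mat"
  assumes M: "M \<in> carrier_mat n r" and c: "c \<in> carrier_vec r"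
  shows "(mat_adjoint M *\<^sub>v (M *\<^sub>v c)) \<bullet>c c = (M *\<^sub>v c) \<bullet>c (M *\<^sub>v c)"
proof -
  have L: "(mat_adjoint M *\<^sub>v (M *\<^sub>v c)) \<bullet>c c =
     (\<Sum>a<r. (\<Sum>k<n. cnj (M $$ (k,a)) * (\<Sum>b<r. M $$ (k,b) * c $ b)) * cnj (c $ a))"
    using M c by (simp add: scalar_prod_def lessThan_atLeast0)
  have R: "(M *\<^sub>v c) \<bullet>c (M *\<^sub>v c) =
     (\<Sum>k<n. (\<Sum>b<r. M $$ (k,b) * c $ b) * (\<Sum>a<r. cnj (M $$ (k,a)) * cnj (c $ a)))"
    using M c by (simp add: scalar_prod_def lessThan_atLeast0)
  have "(\<Sum>a<r. (\<Sum>k<n. cnj (M $$ (k,a)) * (\<Sum>b<r. M $$ (k,b) * c $ b)) * cnj (c $ a))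
      = (\<Sum>a<r. \<Sum>k<n. (\<Sum>b<r. M $$ (k,b) * c $ b) * (cnj (M $$ (k,a)) * cnj (c $ a)))"
    by (intro sum.cong refl) (subst sum_distrib_right, intro sum.cong refl, simp add: mult_ac)
  also have "\<dots> = (\<Sum>k<n. \<Sum>a<r. (\<Sum>b<r. M $$ (k,b) * c $ b) * (cnj (M $$ (k,a)) * cnj (c $ a)))"
    by (rule sum.swap)
  also have "\<dots> = (\<Sum>k<n. (\<Sum>b<r. M $$ (k,b) * c $ b) * (\<Sum>a<r. cnj (M $$ (k,a)) * cnj (c $ a)))"
    by (intro sum.cong refl) (simp add: sum_distrib_left)
  finally show ?thesis using L R by simp
qed

lemma cnj_real: "Im z = 0 \<Longrightarrow> cnj z = z"
  by (simp add: complex_eq_iff)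

lemma factor:
  fixes V U E D M B S :: "complex mat"
  assumes V: "V \<in> carrier_mat n n" "invertible_mat V"
    and U: "U \<in> carrier_mat n r" and Uinj: "\<And>v. v \<in> carrier_vec r \<Longrightarrow> U *\<^sub>v v = 0\<^sub>v n \<Longrightarrow> v = 0\<^sub>v r"
    and E: "E \<in> carrier_mat r r" "mat_adjoint E * E = 1\<^sub>m r"
    and D: "D \<in> carrier_mat r r" "diagonal_mat D" "\<forall>i<r. Im (D $$ (i,i)) = 0"
    and Mdef: "M = minv V * U"
    and eig: "\<forall>i<r. (mat_adjoint M * M) *\<^sub>v col E i = (D $$ (i,i))^2 \<cdot>\<^sub>v col E i"
    and Bdef: "B = E * minv D" and Sdef: "S = M * B"
  shows "mat_adjoint S * S = 1\<^sub>m r \<and> S \<in> carrier_mat n r \<and> minv B \<in> carrier_mat r r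
    \<and> S * minv B = M \<and> mat_adjoint S * M = minv B"
proof -
  define W where "W = minv V"
  have W: "W \<in> carrier_mat n n" "V * W = 1\<^sub>m n" "W * V = 1\<^sub>m n"
    using minv_props'[OF V] unfolding W_def by auto
  have M: "M \<in> carrier_mat n r" using Mdef W U unfolding W_def by auto
  define Mh where "Mh = mat_adjoint M"
  have Mh: "Mh \<in> carrier_mat r n" using M unfolding Mh_def by auto
  define Eh where "Eh = mat_adjoint E"
  have Eh: "Eh \<in> carrier_mat r r" using E unfolding Eh_def by auto
  have EEh: "E * Eh = 1\<^sub>m r" using mat_mult_left_right_inverse[OF Eh E(1)] E(2) unfolding Eh_def by auto
  have Dnz: "D $$ (i,i) \<noteq> 0" if i: "i < r" for i
  proof
    assume D0: "D $$ (i,i) = 0"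
    define c where "c = col E i"
    have c: "c \<in> carrier_vec r" using E i unfolding c_def by auto
    have "(mat_adjoint M * M) *\<^sub>v c = (D $$ (i,i))^2 \<cdot>\<^sub>v c" using eig i unfolding c_def by simp
    also have "\<dots> = 0\<^sub>v r" using D0 c by (intro eq_vecI) auto
    finally have "(mat_adjoint M * M) *\<^sub>v c = 0\<^sub>v r" .
    then have "Mh *\<^sub>v (M *\<^sub>v c) = 0\<^sub>v r" using Mh M c unfolding Mh_def by auto
    then have "(M *\<^sub>v c) \<bullet>c (M *\<^sub>v c) = 0"
      using adj_inner[OF M c] c unfolding Mh_def by simp
    then have Mc: "M *\<^sub>v c = 0\<^sub>v n"
      using conjugate_square_eq_0_vec[of "M *\<^sub>v c" n] M c by auto
    have "V *\<^sub>v (M *\<^sub>v c) = V *\<^sub>v (W *\<^sub>v (U *\<^sub>v c))"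
      using Mdef assoc_mult_mat_vec[OF W(1) U c] unfolding W_def by simp
    also have "\<dots> = (V * W) *\<^sub>v (U *\<^sub>v c)"
      using assoc_mult_mat_vec[OF V(1) W(1), of "U *\<^sub>v c"] U c by simp
    also have "\<dots> = U *\<^sub>v c" using W(2) U c by simp
    finally have "U *\<^sub>v c = V *\<^sub>v (M *\<^sub>v c)" by simp
    also have "\<dots> = 0\<^sub>v n" using Mc V by (intro eq_vecI) (auto simp: scalar_prod_def)
    finally have c0: "c = 0\<^sub>v r" using Uinj c by blast
    have z: "E $$ (k,i) = 0" if k: "k < r" for k
    proof -
      have "c $ k = 0" using c0 k by simp
      then show ?thesis using E i k unfolding c_def by simp
    qed
    have "(mat_adjoint E * E) $$ (i,i) = 1" using E i by simp
    moreover have "(mat_adjoint E * E) $$ (i,i) = (\<Sum>k<r. cnj (E $$ (k,i)) * E $$ (k,i))"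
      using mult_entry[OF adj_carrier[OF E(1)] E(1) i i] E i by (auto intro!: sum.cong)
    moreover have "(\<Sum>k<r. cnj (E $$ (k,i)) * E $$ (k,i)) = 0" using z by simp
    ultimately show False by simp
  qed
  define Dinv where "Dinv = mat r r (\<lambda>(i,j). if i = j then inverse (D $$ (i,i)) else 0)"
  have Dinv: "Dinv \<in> carrier_mat r r" unfolding Dinv_def by simp
  have DDinv: "D * Dinv = 1\<^sub>m r"
  proof (rule eq_matI)
    fix i j assume "i < dim_row (1\<^sub>m r :: complex mat)" "j < dim_col (1\<^sub>m r :: complex mat)"
    then have i: "i < r" and j: "j < r" by auto
    have "(D * Dinv) $$ (i,j) = D $$ (i,i) * Dinv $$ (i,j)" by (rule diag_mult_entry[OF D(1,2) Dinv i j])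
    then show "(D * Dinv) $$ (i,j) = 1\<^sub>m r $$ (i,j)" using Dnz[OF i] i j unfolding Dinv_def by (cases "i = j") auto
  qed (use D Dinv in auto)
  define Di where "Di = minv D"
  have Di: "Di \<in> carrier_mat r r" "D * Di = 1\<^sub>m r" "Di * D = 1\<^sub>m r"
    using minv_props[OF D(1) Dinv DDinv] unfolding Di_def by auto
  define Dih where "Dih = mat_adjoint Di"
  have Dih: "Dih \<in> carrier_mat r r" using Di unfolding Dih_def by auto
  have Dh: "mat_adjoint D = D"
  proof (rule eq_matI)
    fix i j assume "i < dim_row D" "j < dim_col D"
    then have i: "i < r" and j: "j < r" using D by auto
    show "mat_adjoint D $$ (i,j) = D $$ (i,j)"
    proof (cases "i = j")
      case True then show ?thesis using D i j by (simp add: cnj_real)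
    next
      case False then show ?thesis using D i j unfolding diagonal_mat_def by simp
    qed
  qed (use D in auto)
  have DihD: "Dih * D = 1\<^sub>m r"
  proof -
    have "Dih * D = mat_adjoint (D * Di)" using adj_mult[OF D(1) Di(1)] Dh unfolding Dih_def by simp
    then show ?thesis using Di adj_one by simp
  qed
  have B: "B \<in> carrier_mat r r" using Bdef E Di unfolding Di_def by auto
  have BX: "B * (D * Eh) = 1\<^sub>m r"
  proof -
    have "B * (D * Eh) = E * (Di * D * Eh)"
      using Bdef assoc_mult_mat[OF E(1) Di(1) mult_carrier_mat[OF D(1) Eh]] assoc_mult_mat[OF Di(1) D(1) Eh]
      unfolding Di_def by simp
    then show ?thesis using Di(3) EEh Eh by simp
  qed
  define Bi where "Bi = minv B"
  have Bi: "Bi \<in> carrier_mat r r" "B * Bi = 1\<^sub>m r" "Bi * B = 1\<^sub>m r"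
    using minv_props[OF B _ BX] D Eh unfolding Bi_def by auto
  have S: "S \<in> carrier_mat n r" using Sdef M B by auto
  have G: "Mh * M * E = E * (D * D)"
  proof (rule eq_matI)
    fix k i assume "k < dim_row (E * (D * D))" "i < dim_col (E * (D * D))"
    then have k: "k < r" and i: "i < r" using E D by auto
    have "(Mh * M * E) $$ (k,i) = row (Mh * M) k \<bullet> col E i" by (rule index_mult_mat(1)) (use Mh M E k i in auto)
    also have "\<dots> = ((Mh * M) *\<^sub>v col E i) $ k" by (rule index_mult_mat_vec[symmetric]) (use Mh M k in auto)
    also have "\<dots> = (D $$ (i,i))^2 * E $$ (k,i)" using eig i k E unfolding Mh_def by simp
    also have "\<dots> = (E * (D * D)) $$ (k,i)"
    proof -
      have DD: "D * D \<in> carrier_mat r r" using D by auto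
      have DDd: "diagonal_mat (D * D)" unfolding diagonal_mat_def
      proof (intro allI impI)
        fix a b assume "a < dim_row (D * D)" "b < dim_col (D * D)" "a \<noteq> b"
        then show "(D * D) $$ (a,b) = 0"
          using diag_mult_entry[OF D(1,2) D(1), of a b] D unfolding diagonal_mat_def by auto
      qed
      have "(E * (D * D)) $$ (k,i) = E $$ (k,i) * (D * D) $$ (i,i)" by (rule mult_diag_entry[OF DD DDd E(1) k i])
      also have "(D * D) $$ (i,i) = D $$ (i,i) * D $$ (i,i)" by (rule diag_mult_entry[OF D(1,2) D(1) i i])
      finally show ?thesis by (simp add: power2_eq_square)
    qed
    finally show "(Mh * M * E) $$ (k,i) = (E * (D * D)) $$ (k,i)" .
  qed (use Mh M E D in auto)
  have SS: "mat_adjoint S * S = 1\<^sub>m r"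
  proof -
    have aS: "mat_adjoint S = Dih * Eh * Mh"
      using Sdef Bdef adj_mult[OF M B] adj_mult[OF E(1) Di(1)] unfolding Dih_def Eh_def Mh_def Di_def by simp
    have DDDi: "D * D * Di = D" using assoc_mult_mat[OF D(1) D(1) Di(1)] Di(2) D by simp
    have "mat_adjoint S * S = (Dih * Eh) * (Mh * (M * (E * Di)))"
      using aS Sdef Bdef assoc_mult_mat[OF mult_carrier_mat[OF Dih Eh] Mh mult_carrier_mat[OF M mult_carrier_mat[OF E(1) Di(1)]]]
      unfolding Di_def by simp
    also have "Mh * (M * (E * Di)) = Mh * M * E * Di"
      using assoc_mult_mat[OF Mh M mult_carrier_mat[OF E(1) Di(1)]] assoc_mult_mat[OF mult_carrier_mat[OF Mh M] E(1) Di(1)]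
      by simp
    also have "\<dots> = E * (D * D) * Di" using G by simp
    also have "\<dots> = E * D" using assoc_mult_mat[OF E(1) mult_carrier_mat[OF D(1) D(1)] Di(1)] DDDi by simp
    also have "(Dih * Eh) * (E * D) = Dih * (Eh * E * D)"
      using assoc_mult_mat[OF Dih Eh mult_carrier_mat[OF E(1) D(1)]] assoc_mult_mat[OF Eh E(1) D(1)] by simp
    also have "\<dots> = Dih * D" using E(2) D unfolding Eh_def by simp
    finally show ?thesis using DihD by simp
  qed
  have SBi: "S * Bi = M" using Sdef assoc_mult_mat[OF M B Bi(1)] Bi(2) M by simp
  have SM: "mat_adjoint S * M = Bi"
  proof -
    have aSc: "mat_adjoint S \<in> carrier_mat r n" using S by auto
    have "Bi = (mat_adjoint S * S) * Bi" using SS Bi by simp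
    also have "\<dots> = mat_adjoint S * (M * (B * Bi))"
      using Sdef assoc_mult_mat[OF aSc S Bi(1)] assoc_mult_mat[OF M B Bi(1)] by simp
    also have "\<dots> = mat_adjoint S * M" using Bi(2) M by simp
    finally show ?thesis by simp
  qed
  show ?thesis using SS S Bi SBi SM unfolding Bi_def by simp
qed

lemma delta2: "i < (n::nat) \<Longrightarrow> (\<Sum>a<n. (if i = a \<and> Q then 1 else 0) * (f a::complex)) = (if Q then f i else 0)"
proof -
  assume i: "i < n"
  have "(\<Sum>a<n. (if i = a \<and> Q then 1 else 0) * f a) = (\<Sum>a<n. if a = i then (if Q then f a else 0) else 0)"
    by (intro sum.cong) auto
  also have "\<dots> = (if i \<in> {..<n} then (if Q then f i else 0) else 0)" by (rule sum.delta) simp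
  finally show ?thesis using i by simp
qed

lemma mlmul_proj:
  fixes P1 P2 P3 :: "complex mat"
  assumes P: "P1 \<in> carrier_mat n1 n1" "P2 \<in> carrier_mat n2 n2" "P3 \<in> carrier_mat n3 n3"
    and P1e: "\<And>a a'. a < n1 \<Longrightarrow> a' < n1 \<Longrightarrow> P1 $$ (a,a') = (if a = a' \<and> a \<in> SA then 1 else 0)"
    and P2e: "\<And>a a'. a < n2 \<Longrightarrow> a' < n2 \<Longrightarrow> P2 $$ (a,a') = (if a = a' \<and> a \<in> SB then 1 else 0)"
    and P3e: "\<And>a a'. a < n3 \<Longrightarrow> a' < n3 \<Longrightarrow> P3 $$ (a,a') = (if a = a' \<and> a \<in> SC then 1 else 0)"
    and Z: "\<And>i j l. i < n1 \<Longrightarrow> j < n2 \<Longrightarrow> l < n3 \<Longrightarrow> (i \<notin> SA \<or> j \<notin> SB \<or> l \<notin> SC) \<Longrightarrow> X i j l = 0"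
  shows "teq n1 n2 n3 (mlmul P1 P2 P3 X) X"
  unfolding teq_def
proof (intro allI impI)
  fix i j l assume ijl: "i < n1" "j < n2" "l < n3"
  have d: "dim_col P1 = n1" "dim_col P2 = n2" "dim_col P3 = n3" using P by auto
  have "mlmul P1 P2 P3 X i j l = (\<Sum>a<n1. \<Sum>b<n2. \<Sum>c<n3. (if i = a \<and> i \<in> SA then 1 else 0) *
     ((if j = b \<and> j \<in> SB then 1 else 0) * ((if l = c \<and> l \<in> SC then 1 else 0) * X a b c)))"
    unfolding mlmul_def d using ijl by (intro sum.cong refl) (simp add: P1e P2e P3e mult.assoc)
  also have "\<dots> = (\<Sum>a<n1. (if i = a \<and> i \<in> SA then 1 else 0) *
     (\<Sum>b<n2. (if j = b \<and> j \<in> SB then 1 else 0) * (\<Sum>c<n3. (if l = c \<and> l \<in> SC then 1 else 0) * X a b c)))"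
    by (simp add: sum_distrib_left)
  also have "\<dots> = (if i \<in> SA then (if j \<in> SB then (if l \<in> SC then X i j l else 0) else 0) else 0)"
    using ijl by (simp add: delta2)
  also have "\<dots> = X i j l" using Z[OF ijl] by auto
  finally show "mlmul P1 P2 P3 X i j l = X i j l" .
qed

lemma nz_distinct: "distinct (nz_rows F)"
  unfolding nz_rows_def by simp

lemma nz_set: "set (nz_rows F) \<subseteq> {..<dim_row F}"
  unfolding nz_rows_def by auto

lemma nz_zero: "i < dim_row F \<Longrightarrow> i \<notin> set (nz_rows F) \<Longrightarrow> j < dim_col F \<Longrightarrow> F $$ (i,j) = 0"
proof -
  assume i: "i < dim_row F" and ni: "i \<notin> set (nz_rows F)" and j: "j < dim_col F"
  have "row F i = 0\<^sub>v (dim_col F)" using i ni unfolding nz_rows_def by auto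
  then have "row F i $ j = 0" using j by simp
  then show ?thesis using i j by simp
qed

lemma nz_all_zero:
  assumes "\<And>i j. i < dim_row F \<Longrightarrow> j < dim_col F \<Longrightarrow> F $$ (i,j) = 0"
  shows "nz_rows F = []"
proof -
  have "row F i = 0\<^sub>v (dim_col F)" if "i < dim_row F" for i
    using assms that by (intro eq_vecI) auto
  then show ?thesis unfolding nz_rows_def by (auto simp: filter_empty_conv)
qed

lemma sel_carrier: "sel_mat F \<in> carrier_mat (dim_row F) (length (nz_rows F))"
  unfolding sel_mat_def by simp

lemma sel_index: "a < dim_row F \<Longrightarrow> b < length (nz_rows F) \<Longrightarrow>
  sel_mat F $$ (a,b) = (if a = nz_rows F ! b then 1 else 0)"
  unfolding sel_mat_def by simp

lemma sel_inj:
  assumes v: "v \<in> carrier_vec (length (nz_rows F))" and z: "sel_mat F *\<^sub>v v = 0\<^sub>v (dim_row F)"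
  shows "v = 0\<^sub>v (length (nz_rows F))"
proof (rule eq_vecI)
  let ?nz = "nz_rows F" and ?m = "length (nz_rows F)"
  fix b assume "b < dim_vec (0\<^sub>v ?m :: complex vec)"
  then have b: "b < ?m" by simp
  have nb: "?nz ! b < dim_row F" using nz_set[of F] b nth_mem by blast
  have "(sel_mat F *\<^sub>v v) $ (?nz ! b) = (\<Sum>b'<?m. sel_mat F $$ (?nz ! b, b') * v $ b')"
    using nb v sel_carrier[of F] by (simp add: scalar_prod_def lessThan_atLeast0)
  also have "\<dots> = (\<Sum>b'<?m. if b' = b then v $ b' else 0)"
    using nb b nth_eq_iff_index_eq[OF nz_distinct[of F]] by (intro sum.cong refl) (auto simp: sel_index)
  also have "\<dots> = v $ b" using b by (subst sum.delta) auto
  finally show "v $ b = 0\<^sub>v ?m $ b" using z nb b by simp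
qed (use v in auto)

lemma sel_proj:
  assumes a: "a < dim_row F" and a': "a' < dim_row F"
  shows "(sel_mat F * mat_adjoint (sel_mat F)) $$ (a,a') = (if a = a' \<and> a \<in> set (nz_rows F) then 1 else 0)"
proof -
  let ?nz = "nz_rows F" and ?m = "length (nz_rows F)"
  have "(sel_mat F * mat_adjoint (sel_mat F)) $$ (a,a') = (\<Sum>b<?m. sel_mat F $$ (a,b) * cnj (sel_mat F $$ (a',b)))"
    using mult_entry[OF sel_carrier adj_carrier[OF sel_carrier] a a'] a a' sel_carrier[of F]
    by (auto intro!: sum.cong)
  also have "\<dots> = (\<Sum>b<?m. if a = ?nz ! b \<and> a' = ?nz ! b then 1 else 0)"
    using a a' by (intro sum.cong refl) (simp add: sel_index)
  also have "\<dots> = (if a = a' \<and> a \<in> set ?nz then 1 else 0)"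
  proof (cases "a = a' \<and> a \<in> set ?nz")
    case True
    then obtain b0 where b0: "b0 < ?m" "?nz ! b0 = a" by (auto simp: in_set_conv_nth)
    have "(\<Sum>b<?m. if a = ?nz ! b \<and> a' = ?nz ! b then 1 else 0) = (\<Sum>b<?m. if b = b0 then 1 else (0::complex))"
      using True b0 nth_eq_iff_index_eq[OF nz_distinct[of F]] by (intro sum.cong refl) auto
    also have "\<dots> = 1" using b0 by (subst sum.delta) auto
    finally show ?thesis using True by auto
  next
    case False
    then have "\<And>b. b < ?m \<Longrightarrow> \<not> (a = ?nz ! b \<and> a' = ?nz ! b)" by auto
    then show ?thesis using False by (intro trans[OF sum.neutral]) auto
  qed
  finally show ?thesis .
qed

lemma rank0_zero:
  fixes A :: "complex mat"
  assumes "mrank A = 0" "i < dim_row A" "j < dim_col A"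
  shows "A $$ (i,j) = 0"
proof (rule ccontr)
  assume nz: "A $$ (i,j) \<noteq> 0"
  let ?n = "dim_row A"
  interpret V: vec_space "TYPE(complex)" ?n .
  let ?c = "col A j"
  have cin: "?c \<in> set (cols A)" using assms(3) by (simp add: cols_def)
  have ccar: "?c \<in> carrier_vec ?n" by simp
  have li: "V.lin_indpt {?c}"
    apply (rule V.finite_lin_indpt2)
      apply simp
     apply (use ccar in simp)
    subgoal premises p for a
    proof -
      have "V.lincomb a {?c} $ i = a ?c * ?c $ i"
        using V.lincomb_index[OF assms(2), of "{?c}" a] ccar by simp
      moreover have "V.lincomb a {?c} $ i = 0" using p assms(2) by simp
      ultimately have "a ?c = 0" using nz assms by simp
      then show ?thesis by simp
    qed
    done
  have "V.rank A \<ge> card {?c}"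
    by (rule V.rank_ge_card_indpt[of A "dim_col A"]) (use cin li in auto)
  then show False using assms(1) unfolding mrank_def by simp
qed

lemma idx_bound: "j < (n2::nat) \<Longrightarrow> l < n3 \<Longrightarrow> j * n3 + l < n2 * n3"
proof -
  assume "j < n2" "l < n3"
  then have "j * n3 + l < (j + 1) * n3" by simp
  also have "\<dots> \<le> n2 * n3" using \<open>j < n2\<close> by (intro mult_le_mono1) simp
  finally show ?thesis .
qed

lemma flat1_entry: "i < n1 \<Longrightarrow> j < n2 \<Longrightarrow> l < n3 \<Longrightarrow> flat1 n1 n2 n3 X $$ (i, j * n3 + l) = X i j l"
  unfolding flat1_def using idx_bound[of j n2 l n3] by simp
lemma flat2_entry: "i < n1 \<Longrightarrow> j < n2 \<Longrightarrow> l < n3 \<Longrightarrow> flat2 n1 n2 n3 X $$ (j, i * n3 + l) = X i j l"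
  unfolding flat2_def using idx_bound[of i n1 l n3] by simp
lemma flat3_entry: "i < n1 \<Longrightarrow> j < n2 \<Longrightarrow> l < n3 \<Longrightarrow> flat3 n1 n2 n3 X $$ (l, i * n2 + j) = X i j l"
  unfolding flat3_def using idx_bound[of i n1 j n2] by simp

lemma divmod_bound: "c < (n2::nat) * n3 \<Longrightarrow> c div n3 < n2 \<and> c mod n3 < n3"
proof -
  assume c: "c < n2 * n3"
  then have "n3 > 0" by (cases n3) auto
  then show ?thesis using less_mult_imp_div_less[OF c] by simp
qed

lemma flat1_zero: "(\<forall>i<dim_row (flat1 n1 n2 n3 X). \<forall>c<dim_col (flat1 n1 n2 n3 X). flat1 n1 n2 n3 X $$ (i,c) = 0)
   \<longleftrightarrow> (\<forall>i<n1. \<forall>j<n2. \<forall>l<n3. X i j l = 0)"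
proof
  assume H: "\<forall>i<dim_row (flat1 n1 n2 n3 X). \<forall>c<dim_col (flat1 n1 n2 n3 X). flat1 n1 n2 n3 X $$ (i,c) = 0"
  show "\<forall>i<n1. \<forall>j<n2. \<forall>l<n3. X i j l = 0"
  proof (intro allI impI)
    fix i j l assume ijl: "i < n1" "j < n2" "l < n3"
    have d: "dim_row (flat1 n1 n2 n3 X) = n1" "dim_col (flat1 n1 n2 n3 X) = n2 * n3" by (simp_all add: flat1_def)
    have "flat1 n1 n2 n3 X $$ (i, j * n3 + l) = 0"
      using H[unfolded d] ijl idx_bound[of j n2 l n3] by blast
    then show "X i j l = 0" using flat1_entry[OF ijl] by simp
  qed
next
  assume "\<forall>i<n1. \<forall>j<n2. \<forall>l<n3. X i j l = 0"
  then show "\<forall>i<dim_row (flat1 n1 n2 n3 X). \<forall>c<dim_col (flat1 n1 n2 n3 X). flat1 n1 n2 n3 X $$ (i,c) = 0"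
    unfolding flat1_def using divmod_bound by auto
qed

lemma flat2_zero: "(\<forall>i<dim_row (flat2 n1 n2 n3 X). \<forall>c<dim_col (flat2 n1 n2 n3 X). flat2 n1 n2 n3 X $$ (i,c) = 0)
   \<longleftrightarrow> (\<forall>i<n1. \<forall>j<n2. \<forall>l<n3. X i j l = 0)"
proof
  assume H: "\<forall>i<dim_row (flat2 n1 n2 n3 X). \<forall>c<dim_col (flat2 n1 n2 n3 X). flat2 n1 n2 n3 X $$ (i,c) = 0"
  show "\<forall>i<n1. \<forall>j<n2. \<forall>l<n3. X i j l = 0"
  proof (intro allI impI)
    fix i j l assume ijl: "i < n1" "j < n2" "l < n3"
    have d: "dim_row (flat2 n1 n2 n3 X) = n2" "dim_col (flat2 n1 n2 n3 X) = n1 * n3" by (simp_all add: flat2_def)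
    have "flat2 n1 n2 n3 X $$ (j, i * n3 + l) = 0"
      using H[unfolded d] ijl idx_bound[of i n1 l n3] by blast
    then show "X i j l = 0" using flat2_entry[OF ijl] by simp
  qed
next
  assume "\<forall>i<n1. \<forall>j<n2. \<forall>l<n3. X i j l = 0"
  then show "\<forall>i<dim_row (flat2 n1 n2 n3 X). \<forall>c<dim_col (flat2 n1 n2 n3 X). flat2 n1 n2 n3 X $$ (i,c) = 0"
    unfolding flat2_def using divmod_bound by auto
qed

lemma flat3_zero: "(\<forall>i<dim_row (flat3 n1 n2 n3 X). \<forall>c<dim_col (flat3 n1 n2 n3 X). flat3 n1 n2 n3 X $$ (i,c) = 0)
   \<longleftrightarrow> (\<forall>i<n1. \<forall>j<n2. \<forall>l<n3. X i j l = 0)"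
proof
  assume H: "\<forall>i<dim_row (flat3 n1 n2 n3 X). \<forall>c<dim_col (flat3 n1 n2 n3 X). flat3 n1 n2 n3 X $$ (i,c) = 0"
  show "\<forall>i<n1. \<forall>j<n2. \<forall>l<n3. X i j l = 0"
  proof (intro allI impI)
    fix i j l assume ijl: "i < n1" "j < n2" "l < n3"
    have d: "dim_row (flat3 n1 n2 n3 X) = n3" "dim_col (flat3 n1 n2 n3 X) = n1 * n2" by (simp_all add: flat3_def)
    have "flat3 n1 n2 n3 X $$ (l, i * n2 + j) = 0"
      using H[unfolded d] ijl idx_bound[of i n1 j n2] by blast
    then show "X i j l = 0" using flat3_entry[OF ijl] by simp
  qed
next
  assume "\<forall>i<n1. \<forall>j<n2. \<forall>l<n3. X i j l = 0"
  then show "\<forall>i<dim_row (flat3 n1 n2 n3 X). \<forall>c<dim_col (flat3 n1 n2 n3 X). flat3 n1 n2 n3 X $$ (i,c) = 0"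
    unfolding flat3_def using divmod_bound by auto
qed

lemma mode_lemma:
  fixes F G V E D M B S :: "complex mat"
  assumes Fn: "dim_row F = n"
    and r: "r = mrank G"
    and GF: "(\<forall>i<dim_row G. \<forall>c<dim_col G. G $$ (i,c) = 0) \<Longrightarrow> (\<forall>i<dim_row F. \<forall>c<dim_col F. F $$ (i,c) = 0)"
    and V: "V \<in> carrier_mat n n" "invertible_mat V"
    and E: "E \<in> carrier_mat r r" "mat_adjoint E * E = 1\<^sub>m r"
    and D: "D \<in> carrier_mat r r" "diagonal_mat D" "\<forall>i<r. Im (D $$ (i,i)) = 0 \<and> 0 \<le> Re (D $$ (i,i))"
    and Mdef: "M = minv V * sel_mat F"
    and eig: "\<forall>i<r. (mat_adjoint M * M) *\<^sub>v col E i = (D $$ (i,i))^2 \<cdot>\<^sub>v col E i"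
    and Bdef: "B = E * minv D" and Sdef: "S = M * B"
  shows "sel_mat F \<in> carrier_mat n r \<and> mat_adjoint S * S = 1\<^sub>m r \<and> S \<in> carrier_mat n r \<and> minv B \<in> carrier_mat r r
    \<and> S * minv B = M \<and> mat_adjoint S * M = minv B"
proof -
  have mr: "length (nz_rows F) = r"
  proof (cases "r = 0")
    case True
    have "\<forall>i<dim_row G. \<forall>c<dim_col G. G $$ (i,c) = 0"
      using rank0_zero[of G] True r by auto
    then have "\<forall>i<dim_row F. \<forall>c<dim_col F. F $$ (i,c) = 0" by (rule GF)
    then have "nz_rows F = []" by (intro nz_all_zero) auto
    then show ?thesis using True by simp
  next
    case False
    then have "dim_vec ((mat_adjoint M * M) *\<^sub>v col E 0) = dim_vec ((D $$ (0,0))^2 \<cdot>\<^sub>v col E 0)"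
      using eig by auto
    then show ?thesis using E Mdef sel_carrier[of F] by simp
  qed
  have U: "sel_mat F \<in> carrier_mat n r" using sel_carrier[of F] mr Fn by simp
  have Uinj: "\<And>v. v \<in> carrier_vec r \<Longrightarrow> sel_mat F *\<^sub>v v = 0\<^sub>v n \<Longrightarrow> v = 0\<^sub>v r"
    using sel_inj[of _ F] mr Fn by simp
  have Dr: "\<forall>i<r. Im (D $$ (i,i)) = 0" using D(3) by auto
  show ?thesis using factor[OF V U Uinj E D(1,2) Dr Mdef eig Bdef Sdef] U by simp
qed

theorem mainTheorem6:
  fixes P1 P2 P3 V1 V2 V3 E1 E2 E3 D1 D2 D3 :: "complex mat"
    and h1 h2 h3 k a1 a2 a3 n1 n2 n3 r1 r2 r3 :: nat
    and T Tc Cc C :: tensor3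
    and U1 U2 U3 M1 M2 M3 B1 B2 B3 S1 S2 S3 :: "complex mat"
  assumes P1: "P1 \<in> carrier_mat (h1+1) (k+1)" and P2: "P2 \<in> carrier_mat (h2+1) (k+1)"
    and P3: "P3 \<in> carrier_mat (h3+1) (k+1)"
    and hk: "h1 \<le> k" "h2 \<le> k" "h3 \<le> k"
    and rk: "mrank P1 = h1 + 1" "mrank P2 = h2 + 1" "mrank P3 = h3 + 1"
    and h2le: "2 \<le> h1" "2 \<le> h2" "2 \<le> h3"
    and prof: "1 \<le> a1" "a1 \<le> h1" "1 \<le> a2" "a2 \<le> h2" "1 \<le> a3" "a3 \<le> h3" "a1 + a2 + a3 = k + 1"
    and gen: "genericity k P1 P2 P3"
  assumes "T = grassmann P1 P2 P3 a1 a2 a3"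
    and "Tc = canonical_form h1 h2 h3 k a1 a2 a3"
    and "n1 = gdim P1 a1" and "n2 = gdim P2 a2" and "n3 = gdim P3 a3"
    and "r1 = mrank (flat1 n1 n2 n3 T)" and "r2 = mrank (flat2 n1 n2 n3 T)"
    and "r3 = mrank (flat3 n1 n2 n3 T)"
  assumes V: "V1 \<in> carrier_mat n1 n1" "V2 \<in> carrier_mat n2 n2" "V3 \<in> carrier_mat n3 n3"
    and Vinv: "invertible_mat V1" "invertible_mat V2" "invertible_mat V3"
    and TcV: "teq n1 n2 n3 Tc (mlmul V1 V2 V3 T)"
  assumes "U1 = sel_mat (flat1 n1 n2 n3 Tc)" and "U2 = sel_mat (flat2 n1 n2 n3 Tc)"
    and "U3 = sel_mat (flat3 n1 n2 n3 Tc)"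
    and "Cc = mlmul (mat_adjoint U1) (mat_adjoint U2) (mat_adjoint U3) Tc"
    and "M1 = minv V1 * U1" and "M2 = minv V2 * U2" and "M3 = minv V3 * U3"
  assumes E: "E1 \<in> carrier_mat r1 r1" "E2 \<in> carrier_mat r2 r2" "E3 \<in> carrier_mat r3 r3"
    and Eunit: "mat_adjoint E1 * E1 = 1\<^sub>m r1" "mat_adjoint E2 * E2 = 1\<^sub>m r2"
      "mat_adjoint E3 * E3 = 1\<^sub>m r3"
    and D: "D1 \<in> carrier_mat r1 r1" "D2 \<in> carrier_mat r2 r2" "D3 \<in> carrier_mat r3 r3"
    and Ddiag: "diagonal_mat D1" "diagonal_mat D2" "diagonal_mat D3"
    and Dnonneg: "\<forall>i<r1. Im (D1 $$ (i,i)) = 0 \<and> 0 \<le> Re (D1 $$ (i,i))"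
      "\<forall>i<r2. Im (D2 $$ (i,i)) = 0 \<and> 0 \<le> Re (D2 $$ (i,i))"
      "\<forall>i<r3. Im (D3 $$ (i,i)) = 0 \<and> 0 \<le> Re (D3 $$ (i,i))"
    and eig: "\<forall>i<r1. (mat_adjoint M1 * M1) *\<^sub>v col E1 i = (D1 $$ (i,i))^2 \<cdot>\<^sub>v col E1 i"
      "\<forall>i<r2. (mat_adjoint M2 * M2) *\<^sub>v col E2 i = (D2 $$ (i,i))^2 \<cdot>\<^sub>v col E2 i"
      "\<forall>i<r3. (mat_adjoint M3 * M3) *\<^sub>v col E3 i = (D3 $$ (i,i))^2 \<cdot>\<^sub>v col E3 i"
  assumes "B1 = E1 * minv D1" and "B2 = E2 * minv D2" and "B3 = E3 * minv D3"
    and "S1 = M1 * B1" and "S2 = M2 * B2" and "S3 = M3 * B3"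
    and "C = mlmul (minv B1) (minv B2) (minv B3) Cc"
  shows "mat_adjoint S1 * S1 = 1\<^sub>m r1 \<and> mat_adjoint S2 * S2 = 1\<^sub>m r2 \<and> mat_adjoint S3 * S3 = 1\<^sub>m r3
    \<and> teq n1 n2 n3 T (mlmul S1 S2 S3 C)
    \<and> teq r1 r2 r3 C (mlmul (mat_adjoint S1) (mat_adjoint S2) (mat_adjoint S3) T)"
proof -
  have U1d: "U1 = sel_mat (flat1 n1 n2 n3 Tc)" and U2d: "U2 = sel_mat (flat2 n1 n2 n3 Tc)"
    and U3d: "U3 = sel_mat (flat3 n1 n2 n3 Tc)" using assms(36-38) by auto
  have Ccd: "Cc = mlmul (mat_adjoint U1) (mat_adjoint U2) (mat_adjoint U3) Tc" using assms(39) .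
  have Cd: "C = mlmul (minv B1) (minv B2) (minv B3) Cc" using assms(67) .
  have TT: "\<forall>i<n1. \<forall>j<n2. \<forall>l<n3. Tc i j l = 0" if H: "\<forall>i<n1. \<forall>j<n2. \<forall>l<n3. T i j l = 0"
  proof (intro allI impI)
    fix i j l assume ijl: "i < n1" "j < n2" "l < n3"
    have "Tc i j l = mlmul V1 V2 V3 T i j l" using TcV ijl unfolding teq_def by blast
    also have "\<dots> = 0" unfolding mlmul_def using V H by (auto intro!: sum.neutral)
    finally show "Tc i j l = 0" .
  qed
  have m1: "sel_mat (flat1 n1 n2 n3 Tc) \<in> carrier_mat n1 r1 \<and> mat_adjoint S1 * S1 = 1\<^sub>m r1 \<and> S1 \<in> carrier_mat n1 r1
    \<and> minv B1 \<in> carrier_mat r1 r1 \<and> S1 * minv B1 = M1 \<and> mat_adjoint S1 * M1 = minv B1"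
  proof (rule mode_lemma[of "flat1 n1 n2 n3 Tc" n1 r1 "flat1 n1 n2 n3 T" V1 E1 D1 M1 B1 S1])
    show "dim_row (flat1 n1 n2 n3 Tc) = n1" by (simp add: flat1_def)
    show "r1 = mrank (flat1 n1 n2 n3 T)" using assms(26) .
    show "\<forall>i<dim_row (flat1 n1 n2 n3 Tc). \<forall>c<dim_col (flat1 n1 n2 n3 Tc). flat1 n1 n2 n3 Tc $$ (i, c) = 0"
      if "\<forall>i<dim_row (flat1 n1 n2 n3 T). \<forall>c<dim_col (flat1 n1 n2 n3 T). flat1 n1 n2 n3 T $$ (i, c) = 0"
      using that TT unfolding flat1_zero by blast
    show "M1 = minv V1 * sel_mat (flat1 n1 n2 n3 Tc)" using assms(40) U1d by simp
  qed (use V Vinv E Eunit D Ddiag Dnonneg eig assms(61) assms(64) in auto)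
  have m2: "sel_mat (flat2 n1 n2 n3 Tc) \<in> carrier_mat n2 r2 \<and> mat_adjoint S2 * S2 = 1\<^sub>m r2 \<and> S2 \<in> carrier_mat n2 r2
    \<and> minv B2 \<in> carrier_mat r2 r2 \<and> S2 * minv B2 = M2 \<and> mat_adjoint S2 * M2 = minv B2"
  proof (rule mode_lemma[of "flat2 n1 n2 n3 Tc" n2 r2 "flat2 n1 n2 n3 T" V2 E2 D2 M2 B2 S2])
    show "dim_row (flat2 n1 n2 n3 Tc) = n2" by (simp add: flat2_def)
    show "r2 = mrank (flat2 n1 n2 n3 T)" using assms(27) .
    show "\<forall>i<dim_row (flat2 n1 n2 n3 Tc). \<forall>c<dim_col (flat2 n1 n2 n3 Tc). flat2 n1 n2 n3 Tc $$ (i, c) = 0"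
      if "\<forall>i<dim_row (flat2 n1 n2 n3 T). \<forall>c<dim_col (flat2 n1 n2 n3 T). flat2 n1 n2 n3 T $$ (i, c) = 0"
      using that TT unfolding flat2_zero by blast
    show "M2 = minv V2 * sel_mat (flat2 n1 n2 n3 Tc)" using assms(41) U2d by simp
  qed (use V Vinv E Eunit D Ddiag Dnonneg eig assms(62) assms(65) in auto)
  have m3: "sel_mat (flat3 n1 n2 n3 Tc) \<in> carrier_mat n3 r3 \<and> mat_adjoint S3 * S3 = 1\<^sub>m r3 \<and> S3 \<in> carrier_mat n3 r3
    \<and> minv B3 \<in> carrier_mat r3 r3 \<and> S3 * minv B3 = M3 \<and> mat_adjoint S3 * M3 = minv B3"
  proof (rule mode_lemma[of "flat3 n1 n2 n3 Tc" n3 r3 "flat3 n1 n2 n3 T" V3 E3 D3 M3 B3 S3])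
    show "dim_row (flat3 n1 n2 n3 Tc) = n3" by (simp add: flat3_def)
    show "r3 = mrank (flat3 n1 n2 n3 T)" using assms(28) .
    show "\<forall>i<dim_row (flat3 n1 n2 n3 Tc). \<forall>c<dim_col (flat3 n1 n2 n3 Tc). flat3 n1 n2 n3 Tc $$ (i, c) = 0"
      if "\<forall>i<dim_row (flat3 n1 n2 n3 T). \<forall>c<dim_col (flat3 n1 n2 n3 T). flat3 n1 n2 n3 T $$ (i, c) = 0"
      using that TT unfolding flat3_zero by blast
    show "M3 = minv V3 * sel_mat (flat3 n1 n2 n3 Tc)" using assms(42) U3d by simp
  qed (use V Vinv E Eunit D Ddiag Dnonneg eig assms(63) assms(66) in auto)
  have Uc: "U1 \<in> carrier_mat n1 r1" "U2 \<in> carrier_mat n2 r2" "U3 \<in> carrier_mat n3 r3"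
    using m1 m2 m3 U1d U2d U3d by auto
  have Sc: "S1 \<in> carrier_mat n1 r1" "S2 \<in> carrier_mat n2 r2" "S3 \<in> carrier_mat n3 r3"
    using m1 m2 m3 by auto
  have Bic: "minv B1 \<in> carrier_mat r1 r1" "minv B2 \<in> carrier_mat r2 r2" "minv B3 \<in> carrier_mat r3 r3"
    using m1 m2 m3 by auto
  have W1: "minv V1 \<in> carrier_mat n1 n1" "minv V1 * V1 = 1\<^sub>m n1" using minv_props'[OF V(1) Vinv(1)] by auto
  have W2: "minv V2 \<in> carrier_mat n2 n2" "minv V2 * V2 = 1\<^sub>m n2" using minv_props'[OF V(2) Vinv(2)] by auto
  have W3: "minv V3 \<in> carrier_mat n3 n3" "minv V3 * V3 = 1\<^sub>m n3" using minv_props'[OF V(3) Vinv(3)] by auto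
  have a: "teq n1 n2 n3 T (mlmul (minv V1) (minv V2) (minv V3) Tc)"
  proof -
    have "mlmul (minv V1) (minv V2) (minv V3) Tc = mlmul (minv V1) (minv V2) (minv V3) (mlmul V1 V2 V3 T)"
      by (rule mlmul_cong) (use TcV W1 W2 W3 in auto)
    moreover have "teq n1 n2 n3 (mlmul (minv V1) (minv V2) (minv V3) (mlmul V1 V2 V3 T))
        (mlmul (minv V1 * V1) (minv V2 * V2) (minv V3 * V3) T)"
      by (rule mlmul_comp[OF W1(1) W2(1) W3(1) V])
    ultimately show ?thesis using mlmul_one[of n1 n2 n3 T] W1 W2 W3 by (auto intro: teq_trans teq_sym)
  qed
  have b: "teq n1 n2 n3 Tc (mlmul U1 U2 U3 Cc)"
  proof -
    have "teq n1 n2 n3 (mlmul U1 U2 U3 Cc) (mlmul (U1 * mat_adjoint U1) (U2 * mat_adjoint U2) (U3 * mat_adjoint U3) Tc)"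
      unfolding Ccd by (rule mlmul_comp[OF Uc adj_carrier[OF Uc(1)] adj_carrier[OF Uc(2)] adj_carrier[OF Uc(3)]])
    moreover have "teq n1 n2 n3 (mlmul (U1 * mat_adjoint U1) (U2 * mat_adjoint U2) (U3 * mat_adjoint U3) Tc) Tc"
    proof (rule mlmul_proj[where SA = "set (nz_rows (flat1 n1 n2 n3 Tc))" and SB = "set (nz_rows (flat2 n1 n2 n3 Tc))"
          and SC = "set (nz_rows (flat3 n1 n2 n3 Tc))"])
      show "U1 * mat_adjoint U1 \<in> carrier_mat n1 n1" "U2 * mat_adjoint U2 \<in> carrier_mat n2 n2"
        "U3 * mat_adjoint U3 \<in> carrier_mat n3 n3" using Uc by auto
      show "(U1 * mat_adjoint U1) $$ (a, a') = (if a = a' \<and> a \<in> set (nz_rows (flat1 n1 n2 n3 Tc)) then 1 else 0)"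
        if "a < n1" "a' < n1" for a a' using sel_proj[of a "flat1 n1 n2 n3 Tc" a'] that U1d by (simp add: flat1_def)
      show "(U2 * mat_adjoint U2) $$ (a, a') = (if a = a' \<and> a \<in> set (nz_rows (flat2 n1 n2 n3 Tc)) then 1 else 0)"
        if "a < n2" "a' < n2" for a a' using sel_proj[of a "flat2 n1 n2 n3 Tc" a'] that U2d by (simp add: flat2_def)
      show "(U3 * mat_adjoint U3) $$ (a, a') = (if a = a' \<and> a \<in> set (nz_rows (flat3 n1 n2 n3 Tc)) then 1 else 0)"
        if "a < n3" "a' < n3" for a a' using sel_proj[of a "flat3 n1 n2 n3 Tc" a'] that U3d by (simp add: flat3_def)
      fix i j l assume ijl: "i < n1" "j < n2" "l < n3"
        and nz: "i \<notin> set (nz_rows (flat1 n1 n2 n3 Tc)) \<or> j \<notin> set (nz_rows (flat2 n1 n2 n3 Tc))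
           \<or> l \<notin> set (nz_rows (flat3 n1 n2 n3 Tc))"
      show "Tc i j l = 0"
      proof -
        { assume "i \<notin> set (nz_rows (flat1 n1 n2 n3 Tc))"
          then have "flat1 n1 n2 n3 Tc $$ (i, j * n3 + l) = 0"
            using nz_zero[of i "flat1 n1 n2 n3 Tc" "j * n3 + l"] ijl idx_bound[of j n2 l n3] by (simp add: flat1_def)
          then have ?thesis using flat1_entry[OF ijl] by simp }
        moreover
        { assume "j \<notin> set (nz_rows (flat2 n1 n2 n3 Tc))"
          then have "flat2 n1 n2 n3 Tc $$ (j, i * n3 + l) = 0"
            using nz_zero[of j "flat2 n1 n2 n3 Tc" "i * n3 + l"] ijl idx_bound[of i n1 l n3] by (simp add: flat2_def)
          then have ?thesis using flat2_entry[OF ijl] by simp }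
        moreover
        { assume "l \<notin> set (nz_rows (flat3 n1 n2 n3 Tc))"
          then have "flat3 n1 n2 n3 Tc $$ (l, i * n2 + j) = 0"
            using nz_zero[of l "flat3 n1 n2 n3 Tc" "i * n2 + j"] ijl idx_bound[of i n1 j n2] by (simp add: flat3_def)
          then have ?thesis using flat3_entry[OF ijl] by simp }
        ultimately show ?thesis using nz by blast
      qed
    qed
    ultimately show ?thesis by (auto intro: teq_trans teq_sym)
  qed
  have c: "teq n1 n2 n3 T (mlmul M1 M2 M3 Cc)"
  proof -
    have "mlmul (minv V1) (minv V2) (minv V3) Tc = mlmul (minv V1) (minv V2) (minv V3) (mlmul U1 U2 U3 Cc)"
      by (rule mlmul_cong) (use b W1 W2 W3 in auto)
    moreover have "teq n1 n2 n3 (mlmul (minv V1) (minv V2) (minv V3) (mlmul U1 U2 U3 Cc)) (mlmul M1 M2 M3 Cc)"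
      using mlmul_comp[OF W1(1) W2(1) W3(1) Uc, of Cc] assms(40-42) by simp
    ultimately show ?thesis using a by (auto intro: teq_trans)
  qed
  have d: "teq n1 n2 n3 T (mlmul S1 S2 S3 C)"
  proof -
    have "teq n1 n2 n3 (mlmul S1 S2 S3 C) (mlmul M1 M2 M3 Cc)"
      using mlmul_comp[OF Sc Bic, of Cc] m1 m2 m3 Cd by simp
    then show ?thesis using c by (auto intro: teq_trans teq_sym)
  qed
  have e: "teq r1 r2 r3 C (mlmul (mat_adjoint S1) (mat_adjoint S2) (mat_adjoint S3) T)"
  proof -
    have "mlmul (mat_adjoint S1) (mat_adjoint S2) (mat_adjoint S3) T
        = mlmul (mat_adjoint S1) (mat_adjoint S2) (mat_adjoint S3) (mlmul M1 M2 M3 Cc)"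
      by (rule mlmul_cong) (use c Sc in auto)
    moreover have "teq r1 r2 r3 (mlmul (mat_adjoint S1) (mat_adjoint S2) (mat_adjoint S3) (mlmul M1 M2 M3 Cc)) C"
    proof -
      have Mc: "M1 \<in> carrier_mat n1 r1" "M2 \<in> carrier_mat n2 r2" "M3 \<in> carrier_mat n3 r3"
        using assms(40-42) W1 W2 W3 Uc by auto
      show ?thesis using mlmul_comp[OF adj_carrier[OF Sc(1)] adj_carrier[OF Sc(2)] adj_carrier[OF Sc(3)] Mc, of Cc]
          m1 m2 m3 Cd by simp
    qed
    ultimately show ?thesis by (auto intro: teq_trans teq_sym)
  qed
  show ?thesis using m1 m2 m3 d e by simp
qed

end
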